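(* For every $m\geq 1$, let $(p_m(x),q_m(x))$ be the symmetric decomposition of $x^mP_m(1/x)$. Then $p_m(x)$ and $q_m(x)$ are both unimodal.
   Context: The Boros–Moll polynomial is $P_m(x)=\sum_{i=0}^m d_i(m)x^i$ with $d_i(m)=2^{-2m}\sum_{k=i}^m 2^k\binom{2m-2k}{m-k}\binom{m+k}{k}\binom{k}{i}$. For a polynomial $f$ of degree $n$, its symmetric decomposition is the pair $(a(x),b(x))$ with $a(x)=\frac{f(x)-x^{n+1}f(1/x)}{1-x}$, $b(x)=\frac{x^nf(1/x)-f(x)}{1-x}$, so $f=a+xb$. A polynomial $\sum_{i=0}^n f_ix^i$ is unimodal if $f_0\le f_1\le\cdots\le f_k\ge f_{k+1}\ge\cdots\ge f_n$ for some $k$. *)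

theory Defs
  imports "HOL-Computational_Algebra.Polynomial"
begin

definition bm_d :: "nat \<Rightarrow> nat \<Rightarrow> real" where
  "bm_d i m = (1 / 2 ^ (2*m)) *
     (\<Sum>k=i..m. 2 ^ k * real ((2*m - 2*k) choose (m - k)) * real ((m + k) choose k) * real (k choose i))"

definition boros_moll :: "nat \<Rightarrow> real poly" where
  "boros_moll m = (\<Sum>i\<le>m. monom (bm_d i m) i)"

text \<open>x^n f(1/x) as a polynomial (for deg f \<le> n).\<close>
definition rev_poly :: "nat \<Rightarrow> real poly \<Rightarrow> real poly" where
  "rev_poly n f = (\<Sum>i\<le>n. monom (coeff f i) (n - i))"

definition sym_dec_a :: "real poly \<Rightarrow> real poly" where
  "sym_dec_a f = (f - monom 1 1 * rev_poly (degree f) f) div [:1, -1:]"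

definition sym_dec_b :: "real poly \<Rightarrow> real poly" where
  "sym_dec_b f = (rev_poly (degree f) f - f) div [:1, -1:]"

definition unimodal_poly :: "real poly \<Rightarrow> bool" where
  "unimodal_poly f \<longleftrightarrow> (\<exists>k\<le>degree f.
      (\<forall>i. i < k \<longrightarrow> coeff f i \<le> coeff f (Suc i)) \<and>
      (\<forall>i. k \<le> i \<and> i < degree f \<longrightarrow> coeff f i \<ge> coeff f (Suc i)))"

end

theory Submission imports Defs begin

lemma binom_cmp:
  fixes k a b :: nat
  assumes "a \<le> b" "k \<le> a + b"
  shows "k choose b \<le> k choose a"
proof (cases "b \<le> k")
  case False then show ?thesis by (simp add: binomial_eq_0)
next
  case True
  show ?thesis
  proof (cases "k div 2 \<le> a")
    case True
    then show ?thesis using binomial_antimono[of a b k] assms \<open>b \<le> k\<close> by simp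
  next
    case False
    have "k choose b = k choose (k - b)" using binomial_symmetric[OF True] .
    also have "\<dots> \<le> k choose a" using binomial_mono[of "k-b" a k] assms False by auto
    finally show ?thesis .
  qed
qed

lemma abel_id:
  fixes e :: "nat \<Rightarrow> real"
  shows "(\<Sum>k\<le>n. e k * (real (k choose j) - real (k choose i))) =
     e n * (real (Suc n choose Suc j) - real (Suc n choose Suc i))
     - (\<Sum>k<n. (e (Suc k) - e k) * (real (Suc k choose Suc j) - real (Suc k choose Suc i)))"
proof (induction n)
  case 0
  then show ?case by (cases j; cases i; simp)
next
  case (Suc n)
  have P: "real (Suc (Suc n) choose Suc j) = real (Suc n choose j) + real (Suc n choose Suc j)"
          "real (Suc (Suc n) choose Suc i) = real (Suc n choose i) + real (Suc n choose Suc i)"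
    by simp_all
  show ?case using Suc.IH by (simp add: P algebra_simps)
qed

declare binomial_Suc_Suc[simp del]

definition ee :: "nat \<Rightarrow> nat \<Rightarrow> real" where
  "ee m k = 2 ^ k * real ((2*m - 2*k) choose (m - k)) * real ((m + k) choose k)"

lemma ee_nonneg: "ee m k \<ge> 0" by (simp add: ee_def)

lemma central_step: "(Suc t)^2 * (2*t+2 choose Suc t) = (2*t+2)*(2*t+1)*(2*t choose t)"
proof -
  have a: "Suc t * (Suc (2*t+1) choose Suc t) = Suc (2*t+1) * (2*t+1 choose t)"
    using Suc_times_binomial[of t "2*t+1"] .
  have b: "Suc t * (Suc (2*t) choose Suc t) = Suc (2*t) * (2*t choose t)"
    using Suc_times_binomial[of t "2*t"] .
  have c: "(2*t+1 choose t) = (2*t+1 choose Suc t)"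
    using binomial_symmetric[of t "2*t+1"] by simp
  have e: "2*t+2 = Suc (2*t+1)" by simp
  have "(Suc t)^2 * (2*t+2 choose Suc t) = Suc t * (Suc t * (Suc (2*t+1) choose Suc t))"
    unfolding e power2_eq_square by (simp only: mult.assoc)
  also have "\<dots> = Suc t * (Suc (2*t+1) * (2*t+1 choose t))" using a by simp
  also have "\<dots> = Suc (2*t+1) * (Suc t * (Suc (2*t) choose Suc t))" using c
    by (simp only: mult.left_commute) simp
  also have "\<dots> = (2*t+2)*(2*t+1)*(2*t choose t)" unfolding b by (simp add: algebra_simps)
  finally show ?thesis .
qed

lemma ee_mono_step:
  assumes "k < m"
  shows "ee m k \<le> ee m (Suc k)"
proof -
  define t where "t = m - k - 1"
  have m: "m = t + k + 1" using assms t_def by simp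
  have h1: "2*m - 2*k = 2*t+2" "m - k = Suc t" "2*m - 2*Suc k = 2*t" "m - Suc k = t"
    "m + k = t + 2*k + 1" "m + Suc k = Suc (t + 2*k + 1)" using m by auto
  define C where "C = (2*t choose t)"
  define N where "N = (t + 2*k + 1 choose k)"
  have cen: "real ((Suc t)^2) * real (2*t+2 choose Suc t) = (2*t+2)*(2*t+1)*C"
    using arg_cong[OF central_step[of t], of real] unfolding C_def by (simp del: of_nat_Suc)
  have ab: "real (Suc k) * real (Suc (t + 2*k + 1) choose Suc k) = (t + 2*k + 2) * N"
  proof -
    have "real (Suc k) * real (Suc (t + 2*k + 1) choose Suc k) = real (Suc (t+2*k+1)) * N"
      unfolding N_def by (metis of_nat_mult Suc_times_binomial)
    then show ?thesis by (simp add: algebra_simps)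
  qed
  have X: "real (2*t+2 choose Suc t) = (2*t+2)*(2*t+1)*C / (Suc t)^2"
    using cen by (simp add: field_simps)
  have Y: "real (Suc (t + 2*k + 1) choose Suc k) = (t + 2*k + 2) * N / Suc k"
    using ab by (simp add: field_simps)
  have CN: "C \<ge> 0" "N \<ge> 0" by (simp_all add: C_def N_def)
  have key: "(2*t+2)*(2*t+1)*C / (Suc t)^2 * N \<le> 2 * C * ((t + 2*k + 2) * N / Suc k)"
  proof -
    have "(2*t+2)*(2*t+1) / (Suc t)^2 \<le> 2 * (t + 2*k + 2) / (Suc k)"
    proof -
      have q: "real (Suc t) > 0" "real (Suc k) > 0" by simp_all
      have e1: "(2*t+2)*(2*t+1) / (Suc t)^2 = 2*(2*real t+1) / Suc t"
      proof -
        have "(2*t+2)*(2*t+1) / (Suc t)^2 = (2*(2*real t+1) * real (Suc t)) / (real (Suc t) * real (Suc t))"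
          by (simp add: power2_eq_square algebra_simps)
        also have "\<dots> = 2*(2*real t+1) / Suc t" using q by (intro nonzero_mult_divide_mult_cancel_right) simp
        finally show ?thesis .
      qed
      have "(2*real t+1) * (real k+1) \<le> (real t + 2*k+2) * (real t+1)"
        by (simp add: algebra_simps)
      then have "2*(2*real t+1) / Suc t \<le> 2 * (t + 2*k + 2) / (Suc k)"
        using q by (simp add: divide_simps) (simp add: algebra_simps)
      then show ?thesis using e1 by simp
    qed
    then have "(2*t+2)*(2*t+1) / (Suc t)^2 * (C * N) \<le> 2 * (t + 2*k + 2) / (Suc k) * (C * N)"
      using CN by (intro mult_right_mono) auto
    then show ?thesis by (simp add: field_simps)
  qed
  have E1: "ee m k = 2^k * ((2*t+2)*(2*t+1)*C / (Suc t)^2 * N)"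
    unfolding ee_def h1 X[symmetric] N_def by simp
  have E2: "ee m (Suc k) = 2^k * (2 * C * ((t + 2*k + 2) * N / Suc k))"
    unfolding ee_def h1 Y[symmetric] C_def by simp
  show ?thesis unfolding E1 E2 using key by (intro mult_left_mono) simp_all
qed


lemma ee_mono: "i \<le> j \<Longrightarrow> j \<le> m \<Longrightarrow> ee m i \<le> ee m j"
proof (induction j)
  case 0 then show ?case by simp
next
  case (Suc j)
  then show ?case
    using ee_mono_step[of j m] by (cases "i = Suc j") auto
qed

lemma bm_d_alt: "bm_d i m = (1 / 2 ^ (2*m)) * (\<Sum>k\<le>m. ee m k * real (k choose i))"
proof -
  have "(\<Sum>k=i..m. 2 ^ k * real ((2*m - 2*k) choose (m - k)) * real ((m + k) choose k) * real (k choose i))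
     = (\<Sum>k\<le>m. ee m k * real (k choose i))"
    unfolding ee_def
    by (rule sum.mono_neutral_left) (auto simp: binomial_eq_0)
  then show ?thesis unfolding bm_d_def by simp
qed

lemma bm_d_nonneg: "bm_d i m \<ge> 0"
  unfolding bm_d_alt by (intro mult_nonneg_nonneg sum_nonneg) (auto simp: ee_nonneg)

lemma bm_d_pos0: "bm_d 0 m > 0"
proof -
  have "0 < ee m 0 * real (0 choose 0)" by (simp add: ee_def)
  also have "\<dots> \<le> (\<Sum>k\<le>m. ee m k * real (k choose 0))"
    by (rule member_le_sum) (auto simp: ee_nonneg)
  finally show ?thesis unfolding bm_d_alt by simp
qed

lemma bm_d_big: "m < i \<Longrightarrow> bm_d i m = 0"
  unfolding bm_d_def by simp

lemma L1: assumes "2*s \<le> m" shows "bm_d (m - s) m \<le> bm_d s m"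
  unfolding bm_d_alt
proof (rule mult_left_mono[OF sum_mono])
  fix k assume "k \<in> {..m}"
  then have "k choose (m - s) \<le> k choose s" using assms by (intro binom_cmp) auto
  then show "ee m k * real (k choose (m - s)) \<le> ee m k * real (k choose s)"
    by (intro mult_left_mono) (auto simp: ee_nonneg)
qed simp

lemma L2: assumes "i + j + 1 = m" "i \<le> j" shows "bm_d i m \<le> bm_d j m"
proof -
  have "(\<Sum>k\<le>m. ee m k * (real (k choose j) - real (k choose i))) =
     ee m m * (real (Suc m choose Suc j) - real (Suc m choose Suc i))
     - (\<Sum>k<m. (ee m (Suc k) - ee m k) * (real (Suc k choose Suc j) - real (Suc k choose Suc i)))"
    by (rule abel_id)
  also have "Suc m choose Suc j = Suc m choose Suc i"
  proof -
    have "Suc m - Suc j = Suc i" using assms by simp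
    then show ?thesis using binomial_symmetric[of "Suc j" "Suc m"] assms by simp
  qed
  finally have eq: "(\<Sum>k\<le>m. ee m k * (real (k choose j) - real (k choose i))) =
    (\<Sum>k<m. (ee m (Suc k) - ee m k) * (real (Suc k choose Suc i) - real (Suc k choose Suc j)))"
    by (simp add: sum_negf[symmetric] algebra_simps)
  have "0 \<le> (\<Sum>k<m. (ee m (Suc k) - ee m k) * (real (Suc k choose Suc i) - real (Suc k choose Suc j)))"
  proof (intro sum_nonneg mult_nonneg_nonneg)
    fix k assume k: "k \<in> {..<m}"
    then show "0 \<le> ee m (Suc k) - ee m k" using ee_mono_step[of k m] by simp
    have "Suc k choose Suc j \<le> Suc k choose Suc i" using k assms by (intro binom_cmp) auto
    then show "0 \<le> real (Suc k choose Suc i) - real (Suc k choose Suc j)" by simp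
  qed
  then have "0 \<le> (\<Sum>k\<le>m. ee m k * real (k choose j)) - (\<Sum>k\<le>m. ee m k * real (k choose i))"
    using eq by (simp add: sum_subtractf[symmetric] algebra_simps)
  then show ?thesis unfolding bm_d_alt by (intro mult_left_mono) simp_all
qed


lemma coeff_bm: "coeff (boros_moll m) i = bm_d i m"
  unfolding boros_moll_def by (simp add: coeff_sum coeff_monom bm_d_big)

lemma coeff_rev: "coeff (rev_poly n f) j = (if j \<le> n then coeff f (n - j) else 0)"
proof -
  have "coeff (rev_poly n f) j = (\<Sum>i\<le>n. if n - i = j then coeff f i else 0)"
    unfolding rev_poly_def by (simp add: coeff_sum coeff_monom)
  also have "\<dots> = (\<Sum>i\<in>(if j \<le> n then {n - j} else {}). coeff f i)"
    by (rule sum.mono_neutral_cong_right) (auto split: if_splits)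
  also have "\<dots> = (if j \<le> n then coeff f (n - j) else 0)" by simp
  finally show ?thesis .
qed

lemma poly_rev1: "poly (rev_poly n f) 1 = (\<Sum>i\<le>n. coeff f i)"
  unfolding rev_poly_def by (simp add: poly_sum poly_monom)

lemma poly_bm1: "poly (boros_moll m) 1 = (\<Sum>i\<le>m. bm_d i m)"
  unfolding boros_moll_def by (simp add: poly_sum poly_monom)

lemma div_coeff:
  fixes p :: "real poly"
  assumes "poly p 1 = 0"
  shows "coeff (p div [:1,-1:]) n = (\<Sum>j\<le>n. coeff p j)"
proof -
  define A where "A = p div [:1,-1:]"
  have "[:-1, 1:] dvd p" using assms poly_eq_0_iff_dvd by auto
  then obtain r where r: "p = [:-1, 1:] * r" by (elim dvdE)
  have "p = [:1, -1:] * (- r)" unfolding r by simp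
  then have "[:1, -1:] dvd p" by (rule dvdI)
  then have pA: "p = A * [:1,-1:]" unfolding A_def by (metis dvd_div_mult_self)
  have cp: "coeff p j = coeff A j - (case j of 0 \<Rightarrow> 0 | Suc k \<Rightarrow> coeff A k)" for j
    unfolding pA by (cases j) simp_all
  show ?thesis unfolding A_def[symmetric]
    by (induction n) (simp_all add: cp)
qed

lemma unimodal_crit:
  assumes "\<And>i. i < K \<Longrightarrow> coeff A i \<le> coeff A (Suc i)"
    and "\<And>i. K \<le> i \<Longrightarrow> coeff A (Suc i) \<le> coeff A i"
  shows "unimodal_poly A"
  unfolding unimodal_poly_def
  by (rule exI[of _ "min K (degree A)"]) (use assms in auto)


theorem proposition1p4:
  fixes m :: nat
  assumes "m \<ge> 1"
  shows "unimodal_poly (sym_dec_a (rev_poly m (boros_moll m))) \<and>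
         unimodal_poly (sym_dec_b (rev_poly m (boros_moll m)))"
proof -
  define f where "f = rev_poly m (boros_moll m)"
  define d where "d = (\<lambda>i. bm_d i m)"
  have cf: "coeff f j = (if j \<le> m then d (m - j) else 0)" for j
    unfolding f_def d_def by (simp add: coeff_rev coeff_bm)
  have degf: "degree f = m"
  proof (rule antisym)
    show "degree f \<le> m" by (rule degree_le) (simp add: cf)
    show "m \<le> degree f" by (rule le_degree) (simp add: cf d_def, use bm_d_pos0[of m] in simp)
  qed
  define R where "R = rev_poly m f"
  have cR: "coeff R j = d j" for j
    unfolding R_def by (auto simp: coeff_rev cf d_def bm_d_big)
  have R: "R = boros_moll m" by (rule poly_eqI) (simp add: cR coeff_bm d_def)
  have pf: "poly f 1 = (\<Sum>i\<le>m. d i)" unfolding f_def d_def by (simp add: poly_rev1 coeff_bm)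
  have pR: "poly R 1 = (\<Sum>i\<le>m. d i)" unfolding R d_def by (simp add: poly_bm1)
  have dnn: "d i \<ge> 0" for i unfolding d_def by (rule bm_d_nonneg)
  define pa where "pa = f - monom 1 1 * R"
  define pb where "pb = R - f"
  have pa1: "poly pa 1 = 0" unfolding pa_def using pf pR by (simp add: poly_monom)
  have pb1: "poly pb 1 = 0" unfolding pb_def using pf pR by simp
  have cpa: "coeff pa (Suc i) = (if Suc i \<le> m then d (m - Suc i) else 0) - d i" for i
    unfolding pa_def by (simp add: coeff_monom_mult cf cR)
  have cpb: "coeff pb (Suc i) = d (Suc i) - (if Suc i \<le> m then d (m - Suc i) else 0)" for i
    unfolding pb_def by (simp add: cf cR)
  have incA: "coeff (pa div [:1,-1:]) (Suc i) - coeff (pa div [:1,-1:]) i = coeff pa (Suc i)" for i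
    using div_coeff[OF pa1] by simp
  have incB: "coeff (pb div [:1,-1:]) (Suc i) - coeff (pb div [:1,-1:]) i = coeff pb (Suc i)" for i
    using div_coeff[OF pb1] by simp
  have ua: "unimodal_poly (pa div [:1,-1:])"
  proof (rule unimodal_crit[where K = "m div 2"])
    fix i assume i: "i < m div 2"
    have "d i \<le> d (m - Suc i)" unfolding d_def using i by (intro L2) auto
    then show "coeff (pa div [:1,-1:]) i \<le> coeff (pa div [:1,-1:]) (Suc i)"
      using incA[of i] cpa[of i] i by (auto split: if_splits)
  next
    fix i assume i: "m div 2 \<le> i"
    have "coeff pa (Suc i) \<le> 0"
    proof (cases "Suc i \<le> m")
      case True
      have "d (m - Suc i) \<le> d i" unfolding d_def using i True by (intro L2) auto
      then show ?thesis using cpa[of i] True by simp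
    next
      case False then show ?thesis using cpa[of i] dnn[of i] by simp
    qed
    then show "coeff (pa div [:1,-1:]) (Suc i) \<le> coeff (pa div [:1,-1:]) i"
      using incA[of i] by simp
  qed
  have ub: "unimodal_poly (pb div [:1,-1:])"
  proof (rule unimodal_crit[where K = "m div 2"])
    fix i assume i: "i < m div 2"
    have "d (m - Suc i) \<le> d (Suc i)" unfolding d_def using i by (intro L1) auto
    then show "coeff (pb div [:1,-1:]) i \<le> coeff (pb div [:1,-1:]) (Suc i)"
      using incB[of i] cpb[of i] i by (auto split: if_splits)
  next
    fix i assume i: "m div 2 \<le> i"
    have "coeff pb (Suc i) \<le> 0"
    proof (cases "Suc i \<le> m")
      case True
      have "d (m - (m - Suc i)) \<le> d (m - Suc i)" unfolding d_def using i True by (intro L1) auto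
      moreover have "m - (m - Suc i) = Suc i" using True by simp
      ultimately show ?thesis using cpb[of i] True by simp
    next
      case False then show ?thesis using cpb[of i] by (simp add: d_def bm_d_big)
    qed
    then show "coeff (pb div [:1,-1:]) (Suc i) \<le> coeff (pb div [:1,-1:]) i"
      using incB[of i] by simp
  qed
  have "sym_dec_a f = pa div [:1,-1:]" unfolding sym_dec_a_def pa_def R_def degf ..
  moreover have "sym_dec_b f = pb div [:1,-1:]" unfolding sym_dec_b_def pb_def R_def degf ..
  ultimately show ?thesis using ua ub unfolding f_def by simp
qed

end
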